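(* Let $(M,d,\mu)$ be a quasi-$b$-geodesic metric measure space with $\mu$ satisfying $(VD)_{\mathrm{loc}}$ and $(VD)_\infty$. Then there exist $c,\gamma>0$ such that $$\frac{V(x,r)}{V(x,s)}\ge c\left(\frac rs\right)^\gamma$$ for all $x\in M$ and all $b\le s\le r\le\operatorname{diam}(M)$, where $\operatorname{diam}(M)=\sup\{d(x,y):x,y\in M\}$.
   Context: Metric measure space: locally compact metric space with a Radon measure $\mu$ of full support; $B(x,r)=\{y:d(x,y)\le r\}$, $V(x,r)=\mu(B(x,r))$. Quasi-$b$-geodesic: there is $C$ with $d_b\le Cd$, where $d_b(x,y)=\inf\sum_i d(x_i,x_{i+1})$ over sequences $x=x_0,\dots,x_m=y$ with $d(x_i,x_{i+1})\le b$. $(VD)_{\mathrm{loc}}$: for each $r>0$ there is $C_r$ with $V(x,2r)\le C_rV(x,r)$ for all $x$. $(VD)_\infty$: there are $r_0,C>0$ with $V(x,2r)\le CV(x,r)$ for all $x$, $r\ge r_0$. *)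

theory Defs
  imports "HOL-Analysis.Analysis"
begin

definition radon_measure :: "'a::metric_space measure \<Rightarrow> bool" where
  "radon_measure \<mu> \<longleftrightarrow>
     sets \<mu> = sets borel \<and>
     (\<forall>K. compact K \<longrightarrow> emeasure \<mu> K < \<infinity>) \<and>
     (\<forall>A \<in> sets borel. emeasure \<mu> A = (INF U \<in> {U. open U \<and> A \<subseteq> U}. emeasure \<mu> U)) \<and>
     (\<forall>U. open U \<longrightarrow> emeasure \<mu> U = (SUP K \<in> {K. compact K \<and> K \<subseteq> U}. emeasure \<mu> K))"

definition full_support :: "'a::metric_space measure \<Rightarrow> bool" where
  "full_support \<mu> \<longleftrightarrow> (\<forall>U. open U \<and> U \<noteq> {} \<longrightarrow> emeasure \<mu> U > 0)"

definition vol :: "'a::metric_space measure \<Rightarrow> 'a \<Rightarrow> real \<Rightarrow> ennreal" where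
  "vol \<mu> x r = emeasure \<mu> (cball x r)"

definition b_chain :: "real \<Rightarrow> 'a::metric_space list \<Rightarrow> 'a \<Rightarrow> 'a \<Rightarrow> bool" where
  "b_chain b xs x y \<longleftrightarrow> xs \<noteq> [] \<and> hd xs = x \<and> last xs = y \<and>
     (\<forall>i. Suc i < length xs \<longrightarrow> dist (xs ! i) (xs ! Suc i) \<le> b)"

definition chain_length :: "'a::metric_space list \<Rightarrow> real" where
  "chain_length xs = (\<Sum>i<length xs - 1. dist (xs ! i) (xs ! Suc i))"

text \<open>The b-distance d_b (infimum over b-chains; \<open>\<infinity>\<close> if no chain exists).\<close>
definition dist_b :: "real \<Rightarrow> 'a::metric_space \<Rightarrow> 'a \<Rightarrow> ereal" where
  "dist_b b x y = (INF xs \<in> {xs. b_chain b xs x y}. ereal (chain_length xs))"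

definition quasi_b_geodesic :: "real \<Rightarrow> 'a::metric_space itself \<Rightarrow> bool" where
  "quasi_b_geodesic b _ \<longleftrightarrow> (\<exists>C. \<forall>x y::'a. dist_b b x y \<le> ereal (C * dist x y))"

definition VD_loc :: "'a::metric_space measure \<Rightarrow> bool" where
  "VD_loc \<mu> \<longleftrightarrow> (\<forall>r>0. \<exists>C. \<forall>x. vol \<mu> x (2 * r) \<le> ennreal C * vol \<mu> x r)"

definition VD_infty :: "'a::metric_space measure \<Rightarrow> bool" where
  "VD_infty \<mu> \<longleftrightarrow> (\<exists>r0>0. \<exists>C>0. \<forall>x. \<forall>r\<ge>r0. vol \<mu> x (2 * r) \<le> ennreal C * vol \<mu> x r)"

definition diam_space :: "'a::metric_space itself \<Rightarrow> ereal" where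
  "diam_space _ = (SUP p \<in> (UNIV :: ('a \<times> 'a) set). ereal (dist (fst p) (snd p)))"

end

theory Submission imports Defs begin

lemma chain_cross:
  assumes "b_chain b xs x y" "dist x y > a" "a \<ge> 0"
  shows "\<exists>z. a < dist x z \<and> dist x z \<le> a + b"
proof -
  define P where "P i \<longleftrightarrow> i < length xs \<and> dist x (xs!i) > a" for i
  have ne: "xs \<noteq> []" and hd: "hd xs = x" and la: "last xs = y"
    and st: "\<And>i. Suc i < length xs \<Longrightarrow> dist (xs ! i) (xs ! Suc i) \<le> b"
    using assms(1) unfolding b_chain_def by auto
  have "P (length xs - 1)" using ne la assms(2) by (simp add: P_def last_conv_nth)
  define i where "i = (LEAST i. P i)"
  have Pi: "P i" unfolding i_def by (rule LeastI) fact
  have "i \<noteq> 0" using Pi hd ne assms(3) unfolding P_def by (metis dist_self hd_conv_nth not_less)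
  then obtain j where ij: "i = Suc j" by (cases i) auto
  have "\<not> P j" using ij unfolding i_def using not_less_Least[of j P] by simp
  then have dj: "dist x (xs!j) \<le> a" using Pi ij unfolding P_def by auto
  have "dist (xs!j) (xs!i) \<le> b" using st Pi ij unfolding P_def by auto
  then have "dist x (xs!i) \<le> a + b" using dj dist_triangle[of x "xs!i" "xs!j"] by linarith
  then show ?thesis using Pi unfolding P_def by blast
qed

theorem lemma2p12:
  fixes \<mu> :: "'a::metric_space measure" and b :: real
  assumes "locally_compact_space (euclidean :: 'a topology)"
    and "radon_measure \<mu>"
    and "full_support \<mu>"
    and "b > 0"
    and "quasi_b_geodesic b TYPE('a)"
    and "VD_loc \<mu>"
    and "VD_infty \<mu>"
  shows "\<exists>c \<gamma>. c > 0 \<and> \<gamma> > 0 \<and>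
           (\<forall>x r s. b \<le> s \<and> s \<le> r \<and> ereal r \<le> diam_space TYPE('a) \<longrightarrow>
              measure \<mu> (cball x r) / measure \<mu> (cball x s) \<ge> c * (r / s) powr \<gamma>)"
proof -
  have sets: "sets \<mu> = sets borel" using assms(2) unfolding radon_measure_def by auto
  have cpt: "compact K \<Longrightarrow> emeasure \<mu> K < \<infinity>" for K
    using assms(2) unfolding radon_measure_def by auto
  have cbs: "cball x r \<in> sets \<mu>" for x :: 'a and r using sets by simp
  have fin: "emeasure \<mu> (cball x r) \<noteq> \<infinity>" for x r
  proof -
    obtain U K where UK: "open U" "compact K" "x \<in> U" "U \<subseteq> K"
      using assms(1) unfolding locally_compact_space_def by (auto simp: compactin_euclidean_iff) blast
    obtain e where e: "e > 0" "ball x e \<subseteq> U" using UK openE by blast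
    have sub: "cball x (e/2) \<subseteq> K" proof -
      have "cball x (e/2) \<subseteq> ball x e" using e(1) by (auto simp: subset_iff)
      then show ?thesis using e UK by blast
    qed
    have Ks: "K \<in> sets \<mu>" using sets UK(2) compact_imp_closed borel_closed by auto
    have f0: "emeasure \<mu> (cball x (e/2)) < \<infinity>"
      using emeasure_mono[OF sub Ks] cpt[OF UK(2)] by (meson order.strict_trans1)
    have fn: "emeasure \<mu> (cball x (2^n * (e/2))) < \<infinity>" for n
    proof (induction n)
      case 0 then show ?case using f0 by simp
    next
      case (Suc n)
      obtain C where "\<forall>x. vol \<mu> x (2 * (2^n*(e/2))) \<le> ennreal C * vol \<mu> x (2^n*(e/2))"
        using assms(6) e unfolding VD_loc_def by (metis divide_pos_pos zero_less_numeral zero_less_power mult_pos_pos)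
      then have "emeasure \<mu> (cball x (2^Suc n * (e/2))) \<le> ennreal C * emeasure \<mu> (cball x (2^n*(e/2)))"
        unfolding vol_def by (simp add: mult.assoc)
      also have "\<dots> < \<infinity>" using Suc by (simp add: ennreal_mult_less_top)
      finally show ?case .
    qed
    obtain n where n: "r / (e/2) < 2^n" using real_arch_pow[of 2] by auto
    have "r \<le> 2^n * (e/2)" using n e by (simp add: field_simps)
    then have "cball x r \<subseteq> cball x (2^n * (e/2))" by auto
    then have "emeasure \<mu> (cball x r) < \<infinity>" using emeasure_mono[OF _ cbs] fn
      by (meson order.strict_trans1)
    then show ?thesis by simp
  qed
  define m where "m x r = measure \<mu> (cball x r)" for x r
  have em: "emeasure \<mu> (cball x r) = ennreal (m x r)" for x r
    unfolding m_def using fin emeasure_eq_ennreal_measure by (metis infinity_ennreal_def)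
  have m0: "m x r \<ge> 0" for x r unfolding m_def by simp
  have msub: "cball x r \<subseteq> cball y r' \<Longrightarrow> m x r \<le> m y r'" for x y r r'
    using emeasure_mono[OF _ cbs, of "cball x r" y r'] em m0 ennreal_le_iff by metis
  have mono: "r \<le> r' \<Longrightarrow> m x r \<le> m x r'" for x r r' by (rule msub) auto
  have pos: "r > 0 \<Longrightarrow> m x r > 0" for x r
  proof -
    assume r: "r > 0"
    have "emeasure \<mu> (ball x r) > 0" using assms(3) r unfolding full_support_def by auto
    also have "\<dots> \<le> emeasure \<mu> (cball x r)" by (rule emeasure_mono[OF _ cbs]) auto
    finally show ?thesis using em by simp
  qed
  obtain r0 C where r0: "r0 > 0" and C: "C > 0"
    and dbl: "\<And>x r. r \<ge> r0 \<Longrightarrow> vol \<mu> x (2 * r) \<le> ennreal C * vol \<mu> x r"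
    using assms(7) unfolding VD_infty_def by blast
  define R where "R = max r0 b"
  have R: "R > 0" "R \<ge> b" "R \<ge> r0" using r0 unfolding R_def by auto
  have dbl': "r \<ge> R \<Longrightarrow> m x (2*r) \<le> C * m x r" for x r
  proof -
    assume "r \<ge> R"
    then have "ennreal (m x (2*r)) \<le> ennreal (C * m x r)"
      using dbl[of r x] R C m0 unfolding vol_def em by (simp add: ennreal_mult)
    then show ?thesis using C m0 by (simp add: ennreal_le_iff)
  qed
  have ch: "\<exists>xs. b_chain b xs x y" for x y :: 'a
  proof (rule ccontr)
    assume "\<not> ?thesis"
    then have "{xs. b_chain b xs x y} = {}" by auto
    then have "dist_b b x y = \<infinity>" unfolding dist_b_def by (simp add: top_ereal_def)
    moreover obtain C' where "dist_b b x y \<le> ereal (C' * dist x y)"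
      using assms(5) unfolding quasi_b_geodesic_def by blast
    ultimately show False by simp
  qed
  define q where "q = 1 + 1 / C^2"
  have q: "q > 1" using C unfolding q_def by simp
  have key: "m x (8*t) \<ge> q * m x t" if t: "t \<ge> R" and dt: "ereal (8*t) \<le> diam_space TYPE('a)" for x t
  proof -
    have tp: "t > 0" using t R by simp
    have "ereal (7*t) < diam_space TYPE('a)" using dt tp by (meson ereal_less_eq(3) less_le_trans linorder_not_le mult_less_cancel_right_pos numeral_less_iff semiring_norm(76,81))
    then obtain p :: "'a \<times> 'a" where p: "7*t < dist (fst p) (snd p)"
      unfolding diam_space_def less_SUP_iff by auto
    have "\<exists>y. dist x y > 3*t"
    proof (rule ccontr)
      assume "\<not> ?thesis"
      then have "dist x (fst p) \<le> 3*t" "dist x (snd p) \<le> 3*t" by (auto simp: not_less)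
      then show False using p dist_triangle3[of "fst p" "snd p" x] tp by linarith
    qed
    then obtain y where y: "dist x y > 3*t" by blast
    obtain xs where "b_chain b xs x y" using ch by blast
    from chain_cross[OF this, of "2*t"] y tp obtain z where z: "2*t < dist x z" "dist x z \<le> 2*t + b" by auto
    have z3: "dist x z \<le> 3*t" using z t R by linarith
    have disj: "cball x t \<inter> cball z t = {}"
    proof (rule ccontr)
      assume "\<not> ?thesis"
      then obtain w where "dist x w \<le> t" "dist z w \<le> t" by auto
      then show False using z dist_triangle3[of x z w] dist_commute[of w x] dist_commute[of w z] by linarith
    qed
    have un: "cball x t \<union> cball z t \<subseteq> cball x (8*t)"
    proof
      fix w assume "w \<in> cball x t \<union> cball z t"
      then show "w \<in> cball x (8*t)" using z3 tp dist_triangle[of x w z] by auto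
    qed
    have "ennreal (m x t + m z t) = emeasure \<mu> (cball x t \<union> cball z t)"
      using plus_emeasure[OF cbs cbs disj] em m0 by (simp add: ennreal_plus)
    also have "\<dots> \<le> ennreal (m x (8*t))" using emeasure_mono[OF un cbs] em by simp
    finally have s1: "m x t + m z t \<le> m x (8*t)" using m0 by (metis ennreal_le_iff ennreal_plus add_nonneg_nonneg)
    have "m x t \<le> m z (4*t)"
    proof (rule msub, rule subsetI)
      fix w assume "w \<in> cball x t"
      then have "dist x w \<le> t" by simp
      then show "w \<in> cball z (4*t)" using z3 dist_triangle[of z w x] dist_commute[of x z] by simp
    qed
    also have "\<dots> = m z (2*(2*t))" by simp
    also have "\<dots> \<le> C * m z (2*t)" using dbl'[of "2*t" z] t tp by linarith
    also have "\<dots> \<le> C * (C * m z t)" using dbl'[of t z] t C by simp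
    finally have s2: "m x t \<le> C^2 * m z t" by (simp add: power2_eq_square mult.assoc)
    have "m x t / C^2 \<le> m z t" using s2 C by (simp add: field_simps)
    then show ?thesis using s1 unfolding q_def by (simp add: field_simps)
  qed
  have iter: "\<forall>s. s \<ge> R \<longrightarrow> ereal (8^k * s) \<le> diam_space TYPE('a) \<longrightarrow> m x (8^k * s) \<ge> q^k * m x s" for x k
  proof (induction k)
    case 0 then show ?case by simp
  next
    case (Suc k)
    show ?case
    proof (intro allI impI)
      fix s assume s: "s \<ge> R" and d: "ereal (8^Suc k * s) \<le> diam_space TYPE('a)"
      have s8: "8* s \<ge> R" using s R by simp
      have "ereal (8* s) \<le> ereal (8^Suc k * s)" using s R by (simp add: mult_right_mono)
      then have "ereal (8 * s) \<le> diam_space TYPE('a)" using d by (rule order_trans)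
      then have "q * m x s \<le> m x (8 * s)" using key[OF s] by blast
      then have "q^k * (q * m x s) \<le> q^k * m x (8* s)" using q by (simp add: mult_left_mono)
      also have "\<dots> \<le> m x (8^k * (8* s))" using Suc[rule_format, OF s8] d by (simp add: mult.assoc mult.commute)
      finally show "q^Suc k * m x s \<le> m x (8^Suc k * s)" by (simp add: mult.assoc mult.commute mult.left_commute)
    qed
  qed
  define \<gamma> where "\<gamma> = log 8 q"
  have g: "\<gamma> > 0" using q unfolding \<gamma>_def by simp
  have q8: "8 powr \<gamma> = q" using q unfolding \<gamma>_def by simp
  define c where "c = (b / R) powr \<gamma> / q"
  have c: "c > 0" using assms(4) R q unfolding c_def by simp
  show ?thesis
  proof (intro exI conjI allI impI)
    show "c > 0" "\<gamma> > 0" by (fact c, fact g)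
    fix x r s assume A: "b \<le> s \<and> s \<le> r \<and> ereal r \<le> diam_space TYPE('a)"
    then have bs: "b \<le> s" and sr: "s \<le> r" and rd: "ereal r \<le> diam_space TYPE('a)" by auto
    have sp: "s > 0" using bs assms(4) by simp
    have msp: "m x s > 0" using pos[OF sp] .
    define s' where "s' = max s R"
    have s'p: "s' > 0" "s' \<ge> R" "s' \<ge> s" unfolding s'_def using R by auto
    have ratio: "r / s' \<ge> (r / s) * (b / R)"
    proof (cases "s \<ge> R")
      case True
      then have "s' = s" unfolding s'_def by simp
      moreover have "(r/s) * (b/R) \<le> (r/s) * 1" using R sp sr by (intro mult_left_mono) auto
      ultimately show ?thesis by simp
    next
      case False
      then have "s' = R" unfolding s'_def by simp
      moreover have "(r/s) * (b/R) = (r/R) * (b/s)" by simp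
      moreover have "(r/R) * (b/s) \<le> (r/R) * 1" using R sp sr bs by (intro mult_left_mono) auto
      ultimately show ?thesis by (simp add: mult.commute)
    qed
    show "c * (r / s) powr \<gamma> \<le> measure \<mu> (cball x r) / measure \<mu> (cball x s)"
    proof (cases "r \<ge> s'")
      case True
      define k where "k = nat \<lfloor>log 8 (r / s')\<rfloor>"
      have rs1: "r / s' \<ge> 1" using True s'p by simp
      have l0: "log 8 (r/s') \<ge> 0" using rs1 by simp
      have kle: "real k \<le> log 8 (r/s')" unfolding k_def using l0 by linarith
      have kgt: "real k > log 8 (r/s') - 1" unfolding k_def using l0 by linarith
      have "8^k = 8 powr real k" by (simp add: powr_realpow)
      also have "\<dots> \<le> 8 powr (log 8 (r/s'))" using kle by simp
      also have "\<dots> = r / s'" using rs1 by simp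
      finally have "8^k * s' \<le> r" using s'p by (simp add: field_simps)
      then have le1: "m x (8^k * s') \<le> m x r" and le2: "ereal (8^k * s') \<le> diam_space TYPE('a)"
        using mono rd by (auto intro: order_trans[OF _ rd])
      have "q^k * m x s \<le> q^k * m x s'" using mono[OF s'p(3)] q by simp
      also have "\<dots> \<le> m x (8^k * s')" using iter[of k x] s'p le2 by blast
      also have "\<dots> \<le> m x r" by (fact le1)
      finally have main: "q^k * m x s \<le> m x r" .
      have "(r / s) powr \<gamma> * (b / R) powr \<gamma> = ((r / s) * (b / R)) powr \<gamma>"
        using sp R assms(4) sr by (subst powr_mult) auto
      also have "\<dots> \<le> (r / s') powr \<gamma>" using ratio g sp R assms(4) sr by (intro powr_mono2) auto
      also have "\<dots> = q powr (log 8 (r/s'))"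
        using rs1 q8 by (metis powr_log_cancel powr_powr mult.commute less_le_trans zero_less_one zero_less_numeral one_less_numeral_iff semiring_norm(76) numeral_One order_refl not_less)
      also have "\<dots> = q * q powr (log 8 (r/s') - 1)" using q by (simp add: powr_diff)
      also have "\<dots> \<le> q * q powr (real k)" using q kgt by (intro mult_left_mono powr_mono) auto
      also have "\<dots> = q * q^k" using q by (simp add: powr_realpow)
      finally have "(r / s) powr \<gamma> * (b / R) powr \<gamma> \<le> q * q^k" .
      then have "c * (r/s) powr \<gamma> \<le> q^k" unfolding c_def using q by (simp add: field_simps)
      also have "\<dots> \<le> m x r / m x s" using main msp by (simp add: field_simps)
      finally show ?thesis unfolding m_def .
    next
      case False
      then have rR: "r < R" and s'R: "s' = R" using sr unfolding s'_def by auto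
      have "b * r \<le> s * R" using mult_mono[of b s r R] rR bs sp sr assms(4) by simp
      then have "(r/s) * (b/R) \<le> 1" using sp R by (simp add: field_simps)
      then have "((r/s) * (b/R)) powr \<gamma> \<le> 1" using g sp R assms(4) sr by (intro powr_le1) auto
      then have "(r / s) powr \<gamma> * (b / R) powr \<gamma> \<le> 1"
        using sp R assms(4) sr powr_mult[of "r/s" "b/R" \<gamma>] by (metis divide_nonneg_pos less_imp_le order.trans)
      then have "c * (r/s) powr \<gamma> \<le> 1" unfolding c_def using q
        by (smt (verit) divide_le_eq_1 mult.commute powr_ge_zero times_divide_eq_right)
      also have "1 \<le> m x r / m x s" using mono[OF sr] msp by simp
      finally show ?thesis unfolding m_def .
    qed
  qed
qed

end
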